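(* Let $(X,\tau)$ be a topological space which is not statistically compact, let $\infty^X$ be a point not in $X$, $X^s=X\cup\{\infty^X\}$, and $\tau^X_s=\tau\cup\{X^s\setminus C: C \text{ is a closed and statistically compact subset of } X\}$. Then $\tau^X_s$ is a topology on $X^s$ and $(X^s,\tau^X_s)$ is statistically compact.
   Context: For $A\subseteq\mathbb{N}$ let $d_n(A)=|A\cap\{1,\dots,n\}|/n$, $\overline{d}(A)=\limsup_n d_n(A)$, $\underline{d}(A)=\liminf_n d_n(A)$, and $d(A)$ their common value when equal. A sequence in $X$ is a map from an infinite subset $M\subseteq\mathbb{N}$ into $X$, written $(x_n)_{n\in M}$; a subsequence is $(x_n)_{n\in N}$ with $N\subseteq M$ infinite. It is nonthin if $\overline{d}(M)>0$. A nonthin sequence $(x_n)_{n\in M}$ is statistically convergent to $a\in X$ if for every open $U\ni a$, $d(\{n\in M:x_n\notin U\})=0$. A topological space is statistically compact if every nonthin sequence in it has a nonthin subsequence that is statistically convergent to some point of the space; a subset is statistically compact if it is so in the subspace topology. $(X^s,\tau^X_s)$ is called the one point statistical compactification of $X$. *)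

theory Defs
  imports "HOL-Analysis.Analysis"
begin

definition dens_n :: "nat set \<Rightarrow> nat \<Rightarrow> real" where
  "dens_n A n = real (card (A \<inter> {1..n})) / real n"

definition upper_density :: "nat set \<Rightarrow> ereal" where
  "upper_density A = limsup (\<lambda>n. ereal (dens_n A n))"

definition lower_density :: "nat set \<Rightarrow> ereal" where
  "lower_density A = liminf (\<lambda>n. ereal (dens_n A n))"

definition has_density :: "nat set \<Rightarrow> real \<Rightarrow> bool" where
  "has_density A c \<longleftrightarrow> upper_density A = ereal c \<and> lower_density A = ereal c"

definition nonthin :: "nat set \<Rightarrow> bool" where
  "nonthin M \<longleftrightarrow> upper_density M > 0"

definition is_seq :: "'a topology \<Rightarrow> nat set \<Rightarrow> (nat \<Rightarrow> 'a) \<Rightarrow> bool" where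
  "is_seq X M x \<longleftrightarrow> infinite M \<and> (\<forall>n\<in>M. x n \<in> topspace X)"

definition stat_conv :: "'a topology \<Rightarrow> nat set \<Rightarrow> (nat \<Rightarrow> 'a) \<Rightarrow> 'a \<Rightarrow> bool" where
  "stat_conv X M x a \<longleftrightarrow> is_seq X M x \<and> nonthin M \<and> a \<in> topspace X \<and>
     (\<forall>U. openin X U \<and> a \<in> U \<longrightarrow> has_density {n\<in>M. x n \<notin> U} 0)"

definition stat_compact :: "'a topology \<Rightarrow> bool" where
  "stat_compact X \<longleftrightarrow>
     (\<forall>M x. is_seq X M x \<and> nonthin M \<longrightarrow>
        (\<exists>N a. N \<subseteq> M \<and> infinite N \<and> nonthin N \<and> a \<in> topspace X \<and> stat_conv X N x a))"

text \<open>One point statistical compactification; the new point is None, X is embedded via Some.\<close>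
definition stat_carrier :: "'a topology \<Rightarrow> 'a option set" where
  "stat_carrier X = Some ` topspace X \<union> {None}"

definition stat_opens :: "'a topology \<Rightarrow> 'a option set set" where
  "stat_opens X = {Some ` U | U. openin X U} \<union>
     {stat_carrier X - Some ` C | C. closedin X C \<and> stat_compact (subtopology X C)}"

end

theory Submission imports Defs begin

lemma dens_nonneg: "dens_n A n \<ge> 0" by (simp add: dens_n_def)

lemma dens_sandwich:
  assumes "\<And>n. dens_n A n \<le> h n" "h \<longlonglongrightarrow> 0"
  shows "dens_n A \<longlonglongrightarrow> 0"
proof (rule tendsto_sandwich[of "\<lambda>_. 0" "dens_n A" sequentially h 0])
  show "\<forall>\<^sub>F n in sequentially. 0 \<le> dens_n A n" by (rule always_eventually) (simp add: dens_nonneg)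
  show "\<forall>\<^sub>F n in sequentially. dens_n A n \<le> h n" by (rule always_eventually) (simp add: assms(1))
  show "(\<lambda>_. 0::real) \<longlonglongrightarrow> 0" by (rule tendsto_const)
  show "h \<longlonglongrightarrow> 0" by (rule assms(2))
qed

lemma thin_iff: "\<not> nonthin A \<longleftrightarrow> (dens_n A \<longlonglongrightarrow> 0)"
proof
  assume "\<not> nonthin A"
  hence L: "limsup (\<lambda>n. ereal (dens_n A n)) \<le> 0" by (simp add: nonthin_def upper_density_def not_less)
  have "(\<lambda>n. ereal (dens_n A n)) \<longlonglongrightarrow> ereal 0"
  proof (rule order_tendstoI)
    fix a assume "a < ereal 0"
    then show "\<forall>\<^sub>F n in sequentially. a < ereal (dens_n A n)"
      using dens_nonneg[of A] by (auto intro!: always_eventually less_le_trans[of a "ereal 0"])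
  next
    fix a assume "ereal 0 < a"
    then show "\<forall>\<^sub>F n in sequentially. ereal (dens_n A n) < a"
      using L by (intro Limsup_lessD) (simp add: zero_ereal_def)
  qed
  then show "dens_n A \<longlonglongrightarrow> 0" by (simp add: lim_ereal)
next
  assume "dens_n A \<longlonglongrightarrow> 0"
  hence "(\<lambda>n. ereal (dens_n A n)) \<longlonglongrightarrow> ereal 0" by (simp add: lim_ereal)
  hence "limsup (\<lambda>n. ereal (dens_n A n)) = ereal 0"
    by (rule lim_imp_Limsup[OF trivial_limit_sequentially])
  hence "upper_density A = 0" unfolding upper_density_def by (simp add: zero_ereal_def)
  thus "\<not> nonthin A" by (simp add: nonthin_def)
qed

lemma dens0_iff: "has_density A 0 \<longleftrightarrow> (dens_n A \<longlonglongrightarrow> 0)"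
proof
  assume "has_density A 0"
  thus "dens_n A \<longlonglongrightarrow> 0" using thin_iff[of A] by (simp add: has_density_def nonthin_def)
next
  assume "dens_n A \<longlonglongrightarrow> 0"
  hence "(\<lambda>n. ereal (dens_n A n)) \<longlonglongrightarrow> ereal 0" by (simp add: lim_ereal)
  thus "has_density A 0" unfolding has_density_def upper_density_def lower_density_def
    using lim_imp_Limsup[OF trivial_limit_sequentially] lim_imp_Liminf[OF trivial_limit_sequentially]
    by blast
qed

lemma dens0_iff_thin: "has_density A 0 \<longleftrightarrow> \<not> nonthin A"
  by (simp add: dens0_iff thin_iff)

lemma thin_mono: "A \<subseteq> B \<Longrightarrow> \<not> nonthin B \<Longrightarrow> \<not> nonthin A"
  unfolding thin_iff
proof -
  assume "A \<subseteq> B" "dens_n B \<longlonglongrightarrow> 0"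
  have "dens_n A n \<le> dens_n B n" for n
  proof -
    have "card (A \<inter> {1..n}) \<le> card (B \<inter> {1..n})" using \<open>A \<subseteq> B\<close> by (intro card_mono) auto
    hence "real (card (A \<inter> {1..n})) \<le> real (card (B \<inter> {1..n}))" by linarith
    hence "real (card (A \<inter> {1..n})) / real n \<le> real (card (B \<inter> {1..n})) / real n"
      by (rule divide_right_mono) simp
    thus ?thesis unfolding dens_n_def .
  qed
  then show "dens_n A \<longlonglongrightarrow> 0" using \<open>dens_n B \<longlonglongrightarrow> 0\<close>
    by (rule dens_sandwich[of _ "dens_n B"])
qed

lemma thin_Un: "\<not> nonthin A \<Longrightarrow> \<not> nonthin B \<Longrightarrow> \<not> nonthin (A \<union> B)"
  unfolding thin_iff
proof -
  assume a: "dens_n A \<longlonglongrightarrow> 0" "dens_n B \<longlonglongrightarrow> 0"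
  have "dens_n (A \<union> B) n \<le> dens_n A n + dens_n B n" for n
  proof -
    have "card ((A \<union> B) \<inter> {1..n}) \<le> card (A \<inter> {1..n}) + card (B \<inter> {1..n})"
      by (simp only: Int_Un_distrib2) (rule card_Un_le)
    hence "real (card ((A \<union> B) \<inter> {1..n})) \<le> real (card (A \<inter> {1..n})) + real (card (B \<inter> {1..n}))"
      by linarith
    hence "real (card ((A \<union> B) \<inter> {1..n})) / real n \<le> (real (card (A \<inter> {1..n})) + real (card (B \<inter> {1..n}))) / real n"
      by (rule divide_right_mono) simp
    thus ?thesis unfolding dens_n_def by (simp only: add_divide_distrib)
  qed
  moreover have "(\<lambda>n. dens_n A n + dens_n B n) \<longlonglongrightarrow> 0" using tendsto_add[OF a] by (simp only: add.right_neutral)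
  ultimately show "dens_n (A \<union> B) \<longlonglongrightarrow> 0"
    by (rule dens_sandwich[of _ "\<lambda>n. dens_n A n + dens_n B n"])
qed

lemma finite_thin: "finite A \<Longrightarrow> \<not> nonthin A"
  unfolding thin_iff
proof -
  assume "finite A"
  have "dens_n A n \<le> real (card A) * inverse (real n)" for n
  proof -
    have "card (A \<inter> {1..n}) \<le> card A" using \<open>finite A\<close> by (intro card_mono) auto
    hence "real (card (A \<inter> {1..n})) \<le> real (card A)" by linarith
    hence "real (card (A \<inter> {1..n})) / real n \<le> real (card A) / real n"
      by (rule divide_right_mono) simp
    thus ?thesis unfolding dens_n_def by (simp only: divide_inverse)
  qed
  moreover have "(\<lambda>n. real (card A) * inverse (real n)) \<longlonglongrightarrow> 0"
    using tendsto_mult[OF tendsto_const lim_inverse_n] by (simp only: mult_zero_right)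
  ultimately show "dens_n A \<longlonglongrightarrow> 0"
    by (rule dens_sandwich[of _ "\<lambda>n. real (card A) * inverse (real n)"])
qed

lemma nonthin_infinite: "nonthin A \<Longrightarrow> infinite A" using finite_thin by blast



definition SC :: "'a topology \<Rightarrow> 'a set \<Rightarrow> bool" where
  "SC X C \<longleftrightarrow> closedin X C \<and> stat_compact (subtopology X C)"

lemma conv_transfer:
  assumes "stat_conv (subtopology X C) N x a" "a \<in> D" "\<forall>n\<in>N. x n \<in> C \<inter> D"
  shows "stat_conv (subtopology X D) N x a"
proof -
  have sc: "is_seq (subtopology X C) N x" "nonthin N" "a \<in> topspace X" "a \<in> C"
    and op: "\<And>U. openin (subtopology X C) U \<Longrightarrow> a \<in> U \<Longrightarrow> has_density {n\<in>N. x n \<notin> U} 0"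
    using assms(1) by (auto simp: stat_conv_def)
  have "is_seq (subtopology X D) N x"
    using sc(1) assms(3) by (auto simp: is_seq_def)
  moreover have "has_density {n\<in>N. x n \<notin> U} 0" if hU: "openin (subtopology X D) U" "a \<in> U" for U
  proof -
    obtain T where T: "openin X T" "U = T \<inter> D" using openin_subtopology[THEN iffD1, OF hU(1)] by (elim exE conjE)
    have "openin (subtopology X C) (T \<inter> C)" using T(1) by (rule openin_subtopology_Int)
    moreover have "a \<in> T \<inter> C" using T hU sc by auto
    ultimately have "has_density {n\<in>N. x n \<notin> T \<inter> C} 0" by (rule op)
    moreover have "{n\<in>N. x n \<notin> T \<inter> C} = {n\<in>N. x n \<notin> U}" using T assms(3) by auto
    ultimately show ?thesis by simp
  qed
  ultimately show ?thesis using sc assms(2) by (auto simp: stat_conv_def)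
qed

lemma SC_sub:
  assumes "SC X C" "C \<subseteq> D" "is_seq (subtopology X D) M x" "M' \<subseteq> M" "nonthin M'"
    "\<forall>n\<in>M'. x n \<in> C"
  shows "\<exists>N a. N \<subseteq> M \<and> infinite N \<and> nonthin N \<and> a \<in> topspace (subtopology X D)
            \<and> stat_conv (subtopology X D) N x a"
proof -
  have "is_seq (subtopology X C) M' x" using assms nonthin_infinite
    by (auto simp: is_seq_def)
  then obtain N a where N: "N \<subseteq> M'" "infinite N" "nonthin N" "a \<in> topspace (subtopology X C)"
    "stat_conv (subtopology X C) N x a"
    using assms(1,5) unfolding SC_def stat_compact_def by blast
  have "stat_conv (subtopology X D) N x a"
    using conv_transfer[OF N(5)] N(1,4) assms(2,6) by auto
  thus ?thesis using N assms by (intro exI[of _ N] exI[of _ a]) auto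
qed

lemma SC_closed_sub:
  assumes "SC X C" "closedin X D" "D \<subseteq> C"
  shows "SC X D"
  unfolding SC_def stat_compact_def
proof (intro conjI assms allI impI)
  fix M x assume a: "is_seq (subtopology X D) M x \<and> nonthin M"
  have "is_seq (subtopology X C) M x" using a assms(3) by (auto simp: is_seq_def)
  then obtain N p where N: "N \<subseteq> M" "infinite N" "nonthin N" "p \<in> topspace (subtopology X C)"
    "stat_conv (subtopology X C) N x p"
    using assms(1) a unfolding SC_def stat_compact_def by blast
  have xD: "\<forall>n\<in>N. x n \<in> D" using a N(1) by (auto simp: is_seq_def)
  have "p \<in> D"
  proof (rule ccontr)
    assume "p \<notin> D"
    have "openin (subtopology X C) ((topspace X - D) \<inter> C)"
      using assms(2) by (intro openin_subtopology_Int) (auto simp: closedin_def)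
    moreover have "p \<in> (topspace X - D) \<inter> C" using N(4) \<open>p \<notin> D\<close> by auto
    ultimately have "has_density {n\<in>N. x n \<notin> (topspace X - D) \<inter> C} 0"
      using N(5) by (auto simp: stat_conv_def)
    moreover have "{n\<in>N. x n \<notin> (topspace X - D) \<inter> C} = N" using xD by auto
    ultimately show False using N(3) dens0_iff_thin by auto
  qed
  have "stat_conv (subtopology X D) N x p"
    using conv_transfer[OF N(5) \<open>p \<in> D\<close>] xD assms(3) by auto
  thus "\<exists>N a. N \<subseteq> M \<and> infinite N \<and> nonthin N \<and> a \<in> topspace (subtopology X D) \<and>
           stat_conv (subtopology X D) N x a"
    using N \<open>p \<in> D\<close> by (intro exI[of _ N] exI[of _ p]) (auto simp: stat_conv_def)
qed

lemma SC_Un: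
  assumes "SC X C1" "SC X C2"
  shows "SC X (C1 \<union> C2)"
  unfolding SC_def stat_compact_def
proof (intro conjI allI impI)
  show "closedin X (C1 \<union> C2)" using assms by (auto simp: SC_def)
  fix M x assume a: "is_seq (subtopology X (C1 \<union> C2)) M x \<and> nonthin M"
  let ?M1 = "{n\<in>M. x n \<in> C1}" and ?M2 = "{n\<in>M. x n \<in> C2}"
  have eq: "?M1 \<union> ?M2 = M" using a by (auto simp: is_seq_def)
  have "nonthin ?M1 \<or> nonthin ?M2"
  proof (rule ccontr)
    assume "\<not> (nonthin ?M1 \<or> nonthin ?M2)"
    hence "\<not> nonthin (?M1 \<union> ?M2)" using thin_Un[of ?M1 ?M2] by blast
    thus False using a unfolding eq by blast
  qed
  thus "\<exists>N a. N \<subseteq> M \<and> infinite N \<and> nonthin N \<and> a \<in> topspace (subtopology X (C1 \<union> C2)) \<and>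
           stat_conv (subtopology X (C1 \<union> C2)) N x a"
  proof
    assume "nonthin ?M1" show ?thesis by (rule SC_sub[OF assms(1) _ _ _ \<open>nonthin ?M1\<close>]) (use a in auto)
  next
    assume "nonthin ?M2" show ?thesis by (rule SC_sub[OF assms(2) _ _ _ \<open>nonthin ?M2\<close>]) (use a in auto)
  qed
qed

lemma SC_empty: "SC X {}"
  unfolding SC_def stat_compact_def is_seq_def by auto

lemma stat_opens_iff:
  "U \<in> stat_opens X \<longleftrightarrow> (\<exists>V. U = Some ` V \<and> openin X V) \<or> (\<exists>C. U = stat_carrier X - Some ` C \<and> SC X C)"
  unfolding stat_opens_def SC_def by auto

lemma inter1: "openin X V \<Longrightarrow> openin X W \<Longrightarrow> Some ` V \<inter> Some ` W \<in> stat_opens X"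
proof -
  assume "openin X V" "openin X W"
  hence o: "openin X (V \<inter> W)" by (rule openin_Int)
  have "Some ` V \<inter> Some ` W = Some ` (V \<inter> W)" by (rule image_Int[symmetric]) simp
  thus ?thesis unfolding stat_opens_iff using o by blast
qed

lemma inter2: "openin X V \<Longrightarrow> SC X C \<Longrightarrow> Some ` V \<inter> (stat_carrier X - Some ` C) \<in> stat_opens X"
proof -
  assume a: "openin X V" "SC X C"
  hence o: "openin X (V - C)" by (intro openin_diff) (auto simp: SC_def)
  have "V \<subseteq> topspace X" using a(1) by (rule openin_subset)
  hence "Some ` V \<inter> (stat_carrier X - Some ` C) = Some ` (V - C)"
    unfolding stat_carrier_def by auto
  thus ?thesis unfolding stat_opens_iff using o by blast
qed

lemma inter2': "openin X V \<Longrightarrow> SC X C \<Longrightarrow> (stat_carrier X - Some ` C) \<inter> Some ` V \<in> stat_opens X"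
  using inter2[of X V C] by (simp add: Int_commute)

lemma inter3: "SC X C \<Longrightarrow> SC X D \<Longrightarrow> (stat_carrier X - Some ` C) \<inter> (stat_carrier X - Some ` D) \<in> stat_opens X"
proof -
  assume a: "SC X C" "SC X D"
  have "(stat_carrier X - Some ` C) \<inter> (stat_carrier X - Some ` D) = stat_carrier X - Some ` (C \<union> D)"
    by (simp only: image_Un Diff_Un)
  thus ?thesis unfolding stat_opens_iff using SC_Un[OF a] by blast
qed

lemma stat_compactD:
  "stat_compact X \<Longrightarrow> is_seq X M x \<Longrightarrow> nonthin M \<Longrightarrow>
   \<exists>N a. N \<subseteq> M \<and> infinite N \<and> nonthin N \<and> a \<in> topspace X \<and> stat_conv X N x a"
  unfolding stat_compact_def by blast

theorem mainTheorem17: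
  fixes X :: "'a topology"
  assumes "\<not> stat_compact X"
  shows "istopology (\<lambda>U. U \<in> stat_opens X)
       \<and> \<Union>(stat_opens X) = stat_carrier X
       \<and> stat_compact (topology (\<lambda>U. U \<in> stat_opens X))"
proof -
  let ?O = "stat_opens X" and ?car = "stat_carrier X"
  have sub: "U \<subseteq> ?car" if "U \<in> ?O" for U
    using that unfolding stat_opens_iff
  proof (elim disjE exE conjE)
    fix V assume "U = Some ` V" "openin X V"
    thus ?thesis using openin_subset[of X V] by (auto simp: stat_carrier_def)
  qed auto
  have car: "?car \<in> ?O"
    unfolding stat_opens_iff using SC_empty[of X] by (intro disjI2 exI[of _ "{}"]) simp
  have inter: "S \<inter> T \<in> ?O" if hS: "S \<in> ?O" "T \<in> ?O" for S T
    apply (insert hS[unfolded stat_opens_iff])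
    apply (elim disjE exE conjE)
    apply (auto intro: inter1 inter2 inter3 inter2')
    done
  have union: "\<Union>K \<in> ?O" if K: "\<forall>k\<in>K. k \<in> ?O" for K
  proof -
    define Us where "Us = {V. openin X V \<and> Some ` V \<in> K}"
    define Cs where "Cs = {C. SC X C \<and> ?car - Some ` C \<in> K}"
    have Kform: "(\<exists>V\<in>Us. k = Some ` V) \<or> (\<exists>C\<in>Cs. k = ?car - Some ` C)" if k: "k \<in> K" for k
    proof -
      have "k \<in> ?O" using K k by blast
      hence "(\<exists>V. k = Some ` V \<and> openin X V) \<or> (\<exists>C. k = ?car - Some ` C \<and> SC X C)"
        by (simp only: stat_opens_iff)
      thus ?thesis
      proof (elim disjE exE conjE)
        fix V assume "k = Some ` V" "openin X V"
        hence "V \<in> Us" using k unfolding Us_def by simp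
        thus ?thesis using \<open>k = Some ` V\<close> by blast
      next
        fix C assume "k = ?car - Some ` C" "SC X C"
        hence "C \<in> Cs" using k unfolding Cs_def by simp
        thus ?thesis using \<open>k = ?car - Some ` C\<close> by blast
      qed
    qed
    have oU: "openin X (\<Union>Us)" by (rule openin_Union) (simp add: Us_def)
    have UsK: "Some ` V \<in> K" if "V \<in> Us" for V using that by (simp add: Us_def)
    have CsK: "?car - Some ` C \<in> K" if "C \<in> Cs" for C using that by (simp add: Cs_def)
    show ?thesis
    proof (cases "Cs = {}")
      case True
      have "\<Union>K = Some ` (\<Union>Us)"
      proof
        show "\<Union>K \<subseteq> Some ` (\<Union>Us)"
        proof
          fix z assume "z \<in> \<Union>K"
          then obtain k where k: "k \<in> K" "z \<in> k" by blast
          from Kform[OF k(1)] True obtain V where "V \<in> Us" "k = Some ` V" by blast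
          thus "z \<in> Some ` (\<Union>Us)" using k(2) by blast
        qed
        show "Some ` (\<Union>Us) \<subseteq> \<Union>K"
        proof
          fix z assume "z \<in> Some ` (\<Union>Us)"
          then obtain V y where "V \<in> Us" "y \<in> V" "z = Some y" by blast
          thus "z \<in> \<Union>K" using UsK[of V] by blast
        qed
      qed
      thus ?thesis unfolding stat_opens_iff using oU by blast
    next
      case False
      then obtain C0 where C0: "C0 \<in> Cs" by blast
      define D where "D = \<Inter>Cs - \<Union>Us"
      have "closedin X (\<Inter>Cs)" using False by (intro closedin_Inter) (auto simp: Cs_def SC_def)
      hence "closedin X D" unfolding D_def using oU by (rule closedin_diff)
      moreover have "D \<subseteq> C0" using C0 unfolding D_def by blast
      moreover have "SC X C0" using C0 by (simp add: Cs_def)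
      ultimately have SD: "SC X D" using SC_closed_sub by blast
      have "\<Union>K = ?car - Some ` D"
      proof
        show "\<Union>K \<subseteq> ?car - Some ` D"
        proof
          fix z assume "z \<in> \<Union>K"
          then obtain k where k: "k \<in> K" "z \<in> k" by blast
          have zc: "z \<in> ?car" using sub[of k] K k by blast
          from Kform[OF k(1)] show "z \<in> ?car - Some ` D"
          proof
            assume "\<exists>V\<in>Us. k = Some ` V"
            then obtain V where "V \<in> Us" "k = Some ` V" by blast
            then obtain y where "y \<in> V" "z = Some y" using k(2) by blast
            hence "y \<notin> D" using \<open>V \<in> Us\<close> unfolding D_def by blast
            thus ?thesis using zc \<open>z = Some y\<close> by blast
          next
            assume "\<exists>C\<in>Cs. k = ?car - Some ` C"
            then obtain C where C: "C \<in> Cs" "k = ?car - Some ` C" by blast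
            have "D \<subseteq> C" using C(1) unfolding D_def by blast
            thus ?thesis using k(2) C(2) by blast
          qed
        qed
      next
        show "?car - Some ` D \<subseteq> \<Union>K"
        proof
          fix z assume z: "z \<in> ?car - Some ` D"
          show "z \<in> \<Union>K"
          proof (cases z)
            case None
            have "None \<in> ?car - Some ` C0" by (simp add: stat_carrier_def)
            thus ?thesis using None CsK[OF C0] by blast
          next
            case (Some y)
            hence "y \<notin> D" using z by blast
            hence "(\<exists>C\<in>Cs. y \<notin> C) \<or> (\<exists>V\<in>Us. y \<in> V)" unfolding D_def by blast
            thus ?thesis
            proof
              assume "\<exists>C\<in>Cs. y \<notin> C"
              then obtain C where "C \<in> Cs" "y \<notin> C" by blast
              hence "z \<in> ?car - Some ` C" using z Some by blast
              thus ?thesis using CsK[OF \<open>C \<in> Cs\<close>] by blast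
            next
              assume "\<exists>V\<in>Us. y \<in> V"
              then obtain V where "V \<in> Us" "y \<in> V" by blast
              hence "z \<in> Some ` V" using Some by blast
              thus ?thesis using UsK[OF \<open>V \<in> Us\<close>] by blast
            qed
          qed
        qed
      qed
      thus ?thesis unfolding stat_opens_iff using SD by blast
    qed
  qed
  have top: "istopology (\<lambda>U. U \<in> ?O)"
    unfolding istopology_def by (intro conjI allI impI) (auto intro: inter union)
  have U: "\<Union>?O = ?car"
    by (intro antisym Union_least Union_upper car) (erule sub)
  define T where "T = topology (\<lambda>U. U \<in> ?O)"
  have opT: "openin T U \<longleftrightarrow> U \<in> ?O" for U unfolding T_def using top by simp
  have tsT: "topspace T = ?car" unfolding topspace_def opT using U by simp
  have "stat_compact T"
    unfolding stat_compact_def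
  proof (intro allI impI)
    fix M x assume a: "is_seq T M x \<and> nonthin M"
    have xcar: "\<forall>n\<in>M. x n \<in> ?car" using a tsT by (auto simp: is_seq_def)
    show "\<exists>N a. N \<subseteq> M \<and> infinite N \<and> nonthin N \<and> a \<in> topspace T \<and> stat_conv T N x a"
    proof (cases "\<exists>C. SC X C \<and> nonthin {n\<in>M. x n \<in> Some ` C}")
      case True
      then obtain C where C: "SC X C" "nonthin {n\<in>M. x n \<in> Some ` C}" by blast
      let ?M0 = "{n\<in>M. x n \<in> Some ` C}"
      define y where "y n = the (x n)" for n
      have xy: "x n = Some (y n) \<and> y n \<in> C" if "n \<in> ?M0" for n
      proof -
        from that obtain c where "c \<in> C" "x n = Some c" by blast
        thus ?thesis by (simp add: y_def)
      qed
      have Ct: "C \<subseteq> topspace X" using C(1) unfolding SC_def by (simp add: closedin_subset)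
      have "infinite ?M0" using nonthin_infinite[OF C(2)] .
      moreover have "\<forall>n\<in>?M0. y n \<in> topspace (subtopology X C)" using xy Ct by auto
      ultimately have seqC: "is_seq (subtopology X C) ?M0 y" unfolding is_seq_def by blast
      have scC: "stat_compact (subtopology X C)" using C(1) by (simp add: SC_def)
      obtain N p where N: "N \<subseteq> ?M0" "infinite N" "nonthin N" "p \<in> topspace (subtopology X C)"
        "stat_conv (subtopology X C) N y p"
        using stat_compactD[OF scC seqC C(2)] by blast
      have pC: "p \<in> C" "p \<in> topspace X" using N(4) by auto
      have opC: "has_density {n\<in>N. y n \<notin> V} 0" if "openin (subtopology X C) V" "p \<in> V" for V
        using N(5) that unfolding stat_conv_def by blast
      have xyN: "x n = Some (y n)" "y n \<in> C" if "n \<in> N" for n using xy N(1) that by blast+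
      have pcar: "Some p \<in> ?car" using pC unfolding stat_carrier_def by blast
      have "stat_conv T N x (Some p)"
        unfolding stat_conv_def
      proof (intro conjI allI impI)
        have "\<forall>n\<in>N. x n \<in> topspace T" using a N(1) unfolding is_seq_def by blast
        thus "is_seq T N x" using N(2) unfolding is_seq_def by blast
        show "nonthin N" by fact
        show "Some p \<in> topspace T" using pcar tsT by simp
        fix U assume U: "openin T U \<and> Some p \<in> U"
        hence "U \<in> ?O" using opT by blast
        hence "(\<exists>V. U = Some ` V \<and> openin X V) \<or> (\<exists>C'. U = ?car - Some ` C' \<and> SC X C')"
          by (simp only: stat_opens_iff)
        then show "has_density {n\<in>N. x n \<notin> U} 0"
        proof (elim disjE exE conjE)
          fix V assume a: "U = Some ` V" "openin X V"
          have "openin (subtopology X C) (V \<inter> C)" using a(2) by (rule openin_subtopology_Int)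
          moreover have "p \<in> V \<inter> C" using U a(1) pC by blast
          ultimately have "has_density {n\<in>N. y n \<notin> V \<inter> C} 0" by (rule opC)
          moreover have "{n\<in>N. y n \<notin> V \<inter> C} = {n\<in>N. x n \<notin> U}"
          proof (rule Collect_cong)
            fix n
            show "(n \<in> N \<and> y n \<notin> V \<inter> C) = (n \<in> N \<and> x n \<notin> U)"
            proof (cases "n \<in> N")
              case True
              thus ?thesis using xyN[OF True] a(1) by auto
            qed simp
          qed
          ultimately show ?thesis by simp
        next
          fix C' assume b: "U = ?car - Some ` C'" "SC X C'"
          have "openin (subtopology X C) ((topspace X - C') \<inter> C)"
            using b(2) by (intro openin_subtopology_Int) (auto simp: SC_def closedin_def)
          moreover have "p \<in> (topspace X - C') \<inter> C" using U b(1) pC by blast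
          ultimately have "has_density {n\<in>N. y n \<notin> (topspace X - C') \<inter> C} 0" by (rule opC)
          moreover have "{n\<in>N. y n \<notin> (topspace X - C') \<inter> C} = {n\<in>N. x n \<notin> U}"
          proof (rule Collect_cong)
            fix n
            show "(n \<in> N \<and> y n \<notin> (topspace X - C') \<inter> C) = (n \<in> N \<and> x n \<notin> U)"
            proof (cases "n \<in> N")
              case True
              have "y n \<in> topspace X" using xyN(2)[OF True] Ct by blast
              thus ?thesis using xyN[OF True] b(1) True by (auto simp: stat_carrier_def)
            qed simp
          qed
          ultimately show ?thesis by simp
        qed
      qed
      thus ?thesis using N(1,2,3) pcar tsT
        by (intro exI[of _ N] exI[of _ "Some p"]) auto
    next
      case False
      have "stat_conv T M x None"
        unfolding stat_conv_def
      proof (intro conjI allI impI)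
        show "is_seq T M x" "nonthin M" using a by auto
        show "None \<in> topspace T" using tsT by (simp add: stat_carrier_def)
        fix U assume U: "openin T U \<and> None \<in> U"
        hence "U \<in> ?O" using opT by simp
        then consider (a) V where "U = Some ` V" "openin X V" | (b) C' where "U = ?car - Some ` C'" "SC X C'"
          unfolding stat_opens_iff by blast
        then show "has_density {n\<in>M. x n \<notin> U} 0"
        proof cases
          case a thus ?thesis using U by auto
        next
          case b
          have "{n\<in>M. x n \<notin> U} = {n\<in>M. x n \<in> Some ` C'}" using b xcar by auto
          thus ?thesis using False b(2) dens0_iff_thin by auto
        qed
      qed
      thus ?thesis using a tsT nonthin_infinite
        by (intro exI[of _ M] exI[of _ None]) (auto simp: stat_carrier_def)
    qed
  qed
  thus ?thesis using top U unfolding T_def by simp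
qed

end
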